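(* Let $a,b\in\mathbb{R}^+\cup\{\infty\}$, $n\ge1$, $g\in C^1(\mathbb{R}^n,\mathbb{R}^n)$, and define $F:(-a,b)\times\mathbb{R}^n\to(-a,b)\times\mathbb{R}^n$ by $F(U,X)=(U,\,X+g(X)\,U_+)$, where $U_+=\max(U,0)$. Then there exists an open set $W$ containing $(-a,0]\times\mathbb{R}^n$ such that $F|_W$ is injective. *)

theory Defs
  imports "HOL-Analysis.Analysis"
begin

definition shearF :: "(real^'n \<Rightarrow> real^'n) \<Rightarrow> (real \<times> (real^'n)) \<Rightarrow> (real \<times> (real^'n))" where
  "shearF g = (\<lambda>(u, x). (u, x + max u 0 *\<^sub>R g x))"

end

theory Submission
  imports Defs
begin

lemma lip_ball:
  fixes g :: "real^'n \<Rightarrow> real^'n"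
    and g' :: "real^'n \<Rightarrow> ((real^'n) \<Rightarrow>\<^sub>L (real^'n))"
  assumes "\<And>x. (g has_derivative blinfun_apply (g' x)) (at x)"
    and "\<And>x. x \<in> cball 0 r \<Longrightarrow> norm (g' x) \<le> B"
    and "x \<in> cball 0 r" "y \<in> cball 0 r"
  shows "norm (g x - g y) \<le> B * norm (x - y)"
  apply (rule differentiable_bound[where S="cball 0 r" and f'="\<lambda>x. blinfun_apply (g' x)"])
  using assms by (auto intro: has_derivative_at_withinI simp: norm_blinfun.rep_eq[symmetric])

theorem lemma6p1:
  fixes a b :: ereal
    and g :: "real^'n \<Rightarrow> real^'n"
    and g' :: "real^'n \<Rightarrow> ((real^'n) \<Rightarrow>\<^sub>L (real^'n))"
  assumes "0 < a" and "0 < b"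
    and "\<And>x. (g has_derivative blinfun_apply (g' x)) (at x)"
    and "continuous_on UNIV g'"
  shows "\<exists>W. open W
    \<and> {(u, x). -a < ereal u \<and> u \<le> 0} \<subseteq> W
    \<and> W \<subseteq> {(u, x). -a < ereal u \<and> ereal u < b}
    \<and> inj_on (shearF g) W"
proof -
  have "\<forall>k::nat. \<exists>B. \<forall>x\<in>cball 0 (real k). norm (g' x) \<le> B"
  proof
    fix k :: nat
    have "compact (g' ` cball 0 (real k))"
      by (rule compact_continuous_image) (auto intro: continuous_on_subset[OF assms(4)])
    then have "bounded (g' ` cball 0 (real k))" by (rule compact_imp_bounded)
    then show "\<exists>B. \<forall>x\<in>cball 0 (real k). norm (g' x) \<le> B" by (auto simp: bounded_iff)
  qed
  then obtain B where B: "\<And>k x. x \<in> cball 0 (real k) \<Longrightarrow> norm (g' x) \<le> B k" by metis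
  define c where "c k = 1 / (2 * (\<bar>B k\<bar> + 1))" for k
  have cpos: "c k > 0" for k unfolding c_def by (simp add: add_pos_nonneg)
  define I where "I = {u::real. -a < ereal u \<and> ereal u < b}"
  have openI: "open I"
  proof -
    have "open (ereal -` ({-a<..} \<inter> {..<b}))"
      by (rule open_vimage) (auto intro: continuous_on_ereal continuous_on_id)
    moreover have "ereal -` ({-a<..} \<inter> {..<b}) = I" by (auto simp: I_def)
    ultimately show ?thesis by simp
  qed
  define S where "S k = (I \<inter> {..<c k}) \<times> ball (0::real^'n) (real k)" for k
  define W where "W = (\<Union>k. S k)"
  have "open W" unfolding W_def S_def
    by (intro open_UN ballI open_Times open_Int openI) auto
  moreover have "{(u, x). -a < ereal u \<and> u \<le> 0} \<subseteq> W"
  proof clarify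
    fix u :: real and x :: "real^'n"
    assume h: "-a < ereal u" "u \<le> 0"
    obtain k :: nat where k: "norm x < real k" using reals_Archimedean2 by blast
    have "ereal u \<le> 0" using h(2) by (simp add: zero_ereal_def)
    then have "ereal u < b" using assms(2) by (rule order.strict_trans1)
    then have "u \<in> I \<inter> {..<c k}" using h cpos[of k] by (auto simp: I_def)
    then show "(u, x) \<in> W" using k unfolding W_def S_def by auto
  qed
  moreover have "W \<subseteq> {(u, x). -a < ereal u \<and> ereal u < b}"
    unfolding W_def S_def I_def by auto
  moreover have "inj_on (shearF g) W"
  proof (rule inj_onI)
    fix p q assume p: "p \<in> W" and q: "q \<in> W" and e: "shearF g p = shearF g q"
    obtain u x v y where pq: "p = (u, x)" "q = (v, y)" by fastforce
    from e pq have uv: "u = v" and ex: "x + max u 0 *\<^sub>R g x = y + max u 0 *\<^sub>R g y"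
      by (auto simp: shearF_def)
    from p pq obtain k where k: "u < c k" "norm x < real k" unfolding W_def S_def by auto
    from q pq uv obtain j where j: "u < c j" "norm y < real j" unfolding W_def S_def by auto
    obtain m where m: "u < c m" "norm x < real m" "norm y < real m"
    proof (cases "k \<le> j")
      case True
      then have "real k \<le> real j" by simp
      then show ?thesis using that[of j] k j by linarith
    next
      case False
      then have "real j \<le> real k" by simp
      then show ?thesis using that[of k] k j by linarith
    qed
    show "p = q"
    proof (cases "u \<le> 0")
      case True then show ?thesis using ex pq uv by simp
    next
      case False
      then have mx: "max u 0 = u" and up: "u > 0" by auto
      have xy: "x - y = u *\<^sub>R (g y - g x)" using ex mx by (simp add: algebra_simps)
      have L: "norm (g y - g x) \<le> B m * norm (y - x)"
        by (rule lip_ball[OF assms(3)]) (use B m in auto)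
      have "norm (x - y) = u * norm (g y - g x)" using xy up by simp
      also have "\<dots> \<le> u * (B m * norm (x - y))"
        using L up by (simp add: norm_minus_commute mult_left_mono)
      also have "\<dots> \<le> u * (\<bar>B m\<bar> + 1) * norm (x - y)"
        using up by (simp add: mult_left_mono mult_right_mono)
      also have "\<dots> \<le> (1/2) * norm (x - y)"
      proof (rule mult_right_mono)
        have "u * (\<bar>B m\<bar> + 1) < c m * (\<bar>B m\<bar> + 1)"
          using m(1) by (intro mult_strict_right_mono) auto
        also have "\<dots> = 1/2" unfolding c_def by (simp add: field_simps)
        finally show "u * (\<bar>B m\<bar> + 1) \<le> 1/2" by simp
      qed simp
      finally have "x = y" by simp
      then show ?thesis using pq uv by simp
    qed
  qed
  ultimately show ?thesis by blast
qed

end
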